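(* Let $R$ be a von Neumann regular ring with $\omega(\Gamma'(R))<\infty$. Then $\Gamma'(R)$ is a perfect graph.
   Context: All rings are commutative with identity $1\neq 0$. $W^*(R)$ denotes the set of non-zero non-unit elements of $R$. The cozero-divisor graph $\Gamma'(R)$ is the simple graph with vertex set $W^*(R)$, in which distinct $a,b$ are adjacent iff $a\notin Rb$ and $b\notin Ra$. A ring $R$ is von Neumann regular if for every $r\in R$ there is $s\in R$ with $r=r^2s$. $\omega(G)$ is the clique number of a graph $G$ and $\chi(G)$ its chromatic number. A graph $G$ is perfect if every induced subgraph $H$ of $G$ satisfies $\omega(H)=\chi(H)$. *)

theory Defs
  imports Main "HOL-Library.Extended_Nat"
begin

definition von_neumann_regular :: "'a::comm_ring_1 itself \<Rightarrow> bool" where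
  "von_neumann_regular _ \<longleftrightarrow> (\<forall>r::'a. \<exists>s. r = r^2 * s)"

definition W_star :: "'a::comm_ring_1 set" where
  "W_star = {a. a \<noteq> 0 \<and> \<not> a dvd 1}"

definition cozero_adj :: "'a::comm_ring_1 \<Rightarrow> 'a \<Rightarrow> bool" where
  "cozero_adj a b \<longleftrightarrow> a \<noteq> b \<and> a \<notin> {r * b | r. True} \<and> b \<notin> {r * a | r. True}"

definition is_clique :: "('v \<Rightarrow> 'v \<Rightarrow> bool) \<Rightarrow> 'v set \<Rightarrow> bool" where
  "is_clique E S \<longleftrightarrow> (\<forall>x\<in>S. \<forall>y\<in>S. x \<noteq> y \<longrightarrow> E x y)"

definition clique_number :: "'v set \<Rightarrow> ('v \<Rightarrow> 'v \<Rightarrow> bool) \<Rightarrow> enat" where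
  "clique_number V E = Sup {enat (card S) | S. S \<subseteq> V \<and> finite S \<and> is_clique E S}"

definition proper_colouring :: "'v set \<Rightarrow> ('v \<Rightarrow> 'v \<Rightarrow> bool) \<Rightarrow> ('v \<Rightarrow> nat) \<Rightarrow> nat \<Rightarrow> bool" where
  "proper_colouring V E f k \<longleftrightarrow> (\<forall>x\<in>V. f x < k) \<and>
     (\<forall>x\<in>V. \<forall>y\<in>V. x \<noteq> y \<longrightarrow> E x y \<longrightarrow> f x \<noteq> f y)"

(* least number of colours; \<infinity> if no finite colouring exists *)
definition chromatic_number :: "'v set \<Rightarrow> ('v \<Rightarrow> 'v \<Rightarrow> bool) \<Rightarrow> enat" where
  "chromatic_number V E = Inf {enat k | k. \<exists>f. proper_colouring V E f k}"

definition perfect_graph :: "'v set \<Rightarrow> ('v \<Rightarrow> 'v \<Rightarrow> bool) \<Rightarrow> bool" where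
  "perfect_graph V E \<longleftrightarrow> (\<forall>H \<subseteq> V. clique_number H E = chromatic_number H E)"

end

theory Submission
  imports Defs
begin

definition Bset :: "'a::comm_ring_1 \<Rightarrow> 'a set" where
  "Bset e = {f. f*f = f \<and> f*e = f}"

lemma B_step:
  fixes e u v :: "'a::comm_ring_1"
  assumes u: "u \<in> Bset e" and v: "v \<in> Bset e" and uv: "u*v = 0" and v0: "v \<noteq> 0"
    and S: "finite S" "card S = n" "S \<subseteq> Bset u" "0 \<notin> S" "\<forall>x\<in>S. \<forall>y\<in>S. x\<noteq>y \<longrightarrow> x*y = 0"
  shows "\<exists>S. finite S \<and> card S = Suc n \<and> S \<subseteq> Bset e \<and> 0 \<notin> S \<and> (\<forall>x\<in>S. \<forall>y\<in>S. x\<noteq>y \<longrightarrow> x*y = 0)"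
proof -
  have sv: "s*v = 0" if "s \<in> S" for s
  proof -
    have "s*u = s" using that S(3) by (auto simp: Bset_def)
    hence "s*v = s*(u*v)" by (metis mult.assoc)
    thus ?thesis using uv by simp
  qed
  have vS: "v \<notin> S"
  proof
    assume "v \<in> S"
    hence "v*v = 0" using sv by blast
    moreover have "v*v = v" using v by (auto simp: Bset_def)
    ultimately show False using v0 by simp
  qed
  have se: "S \<subseteq> Bset e"
  proof
    fix s assume "s \<in> S"
    hence ss: "s*s = s" "s*u = s" using S(3) by (auto simp: Bset_def)
    moreover have "u*e = u" using u by (auto simp: Bset_def)
    ultimately have "s*e = s" by (metis mult.assoc)
    with ss show "s \<in> Bset e" by (simp add: Bset_def)
  qed
  have vs: "v*s = 0" if "s \<in> S" for s using sv[OF that] by (simp add: mult.commute)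
  show ?thesis
    apply (rule exI[of _ "insert v S"])
    using S vS se v v0 sv vs by auto
qed

lemma B_mult:
  fixes g h x :: "'a::comm_ring_1"
  assumes "g \<in> Bset x" "h*h = h"
  shows "g*h \<in> Bset h"
proof -
  have "g*g = g" using assms by (auto simp: Bset_def)
  have "(g*h)*(g*h) = (g*g)*(h*h)" by (simp add: ac_simps)
  also have "\<dots> = g*h" using \<open>g*g = g\<close> assms(2) by simp
  finally show ?thesis using assms(2) by (simp add: Bset_def mult.assoc)
qed

lemma orth:
  fixes e :: "'a::comm_ring_1"
  assumes "infinite (Bset e)" "e*e = e"
  shows "\<exists>S. finite S \<and> card S = n \<and> S \<subseteq> Bset e \<and> 0 \<notin> S \<and> (\<forall>x\<in>S. \<forall>y\<in>S. x\<noteq>y \<longrightarrow> x*y = 0)"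
  using assms
proof (induction n arbitrary: e)
  case 0 show ?case by (rule exI[of _ "{}"]) auto
next
  case (Suc n)
  have "infinite (Bset e - {0, e})" using Suc.prems by auto
  hence "Bset e - {0,e} \<noteq> {}" by (metis finite.emptyI)
  then obtain f where f: "f \<in> Bset e" "f \<noteq> 0" "f \<noteq> e" by auto
  have ff: "f*f = f" "f*e = f" using f(1) by (auto simp: Bset_def)
  have fe: "e*f = f" using ff by (simp add: mult.commute)
  have ee: "e*e = e" by fact
  have ef: "(e-f)*(e-f) = e-f" by (simp add: algebra_simps ff fe ee)
  have efe: "(e-f)*e = e-f" by (simp add: algebra_simps ff fe ee)
  have efB: "e - f \<in> Bset e" using ef efe by (simp add: Bset_def)
  have o1: "f*(e-f) = 0" by (simp add: algebra_simps ff fe)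
  have o2: "(e-f)*f = 0" by (simp add: algebra_simps ff fe)
  have ne: "e - f \<noteq> 0" using f(3) by simp
  have "infinite (Bset f) \<or> infinite (Bset (e-f))"
  proof (rule ccontr)
    assume "\<not> ?thesis"
    hence fin: "finite (Bset f \<times> Bset (e-f))" by auto
    let ?phi = "\<lambda>g. (g*f, g*(e-f))"
    have "?phi ` Bset e \<subseteq> Bset f \<times> Bset (e-f)"
      using B_mult ff(1) ef by blast
    moreover have "inj_on ?phi (Bset e)"
    proof (rule inj_onI)
      fix g h assume g: "g \<in> Bset e" and h: "h \<in> Bset e" and eq: "?phi g = ?phi h"
      have "g = g*f + g*(e-f)" using g by (simp add: Bset_def algebra_simps)
      also have "\<dots> = h*f + h*(e-f)" using eq by simp
      also have "\<dots> = h" using h by (simp add: Bset_def algebra_simps)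
      finally show "g = h" .
    qed
    ultimately have "finite (Bset e)" using fin by (meson finite_imageD finite_subset)
    thus False using Suc.prems by simp
  qed
  thus ?case
  proof
    assume "infinite (Bset f)"
    from Suc.IH[OF this ff(1)] obtain S where
      "finite S" "card S = n" "S \<subseteq> Bset f" "0 \<notin> S" "\<forall>x\<in>S. \<forall>y\<in>S. x\<noteq>y \<longrightarrow> x*y = 0" by blast
    thus ?case using B_step[OF f(1) efB o1 ne] by blast
  next
    assume "infinite (Bset (e-f))"
    from Suc.IH[OF this ef] obtain S where
      "finite S" "card S = n" "S \<subseteq> Bset (e-f)" "0 \<notin> S" "\<forall>x\<in>S. \<forall>y\<in>S. x\<noteq>y \<longrightarrow> x*y = 0" by blast
    thus ?case using B_step[OF efB f(1) o2 f(2)] by blast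
  qed
qed

lemma finite_max:
  assumes "finite S" "S \<noteq> {}" and trans: "\<And>x y z. le x y \<Longrightarrow> le y z \<Longrightarrow> le x z"
  shows "\<exists>m\<in>S. \<forall>x\<in>S. le m x \<longrightarrow> le x m"
  using assms(1,2)
proof (induction S rule: finite_ne_induct)
  case (singleton x) show ?case by auto
next
  case (insert x F)
  then obtain m where m: "m\<in>F" "\<forall>y\<in>F. le m y \<longrightarrow> le y m" by blast
  show ?case
  proof (cases "le m x \<and> \<not> le x m")
    case True
    have "\<forall>y\<in>insert x F. le x y \<longrightarrow> le y x"
      using m True trans by blast
    thus ?thesis by blast
  next
    case False thus ?thesis using m by blast
  qed
qed


definition antichain :: "('a\<Rightarrow>'a\<Rightarrow>bool) \<Rightarrow> 'a set \<Rightarrow> bool" where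
  "antichain le A \<longleftrightarrow> (\<forall>x\<in>A. \<forall>y\<in>A. x \<noteq> y \<longrightarrow> \<not> le x y)"

lemma antichain_colours:
  assumes B: "B \<subseteq> S'" "antichain le B" "card B = k'" "finite S'"
    and f: "\<forall>x\<in>S'. f x < k'" "\<forall>x\<in>S'. \<forall>y\<in>S'. f x = f y \<longrightarrow> le x y \<or> le y x"
    and refl: "\<And>x. le x x"
  shows "f ` B = {..<k'}"
proof -
  have inj: "inj_on f B"
  proof (rule inj_onI)
    fix p q assume "p \<in> B" "q \<in> B" "f p = f q"
    moreover have "p \<in> S'" "q \<in> S'" using B(1) calculation by auto
    ultimately show "p = q"
    proof -
      assume h: "p \<in> B" "q \<in> B" "f p = f q" "p \<in> S'" "q \<in> S'"
      show "p = q"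
      proof (rule ccontr)
        assume "p \<noteq> q"
        hence "\<not> le p q" "\<not> le q p" using B(2) h(1,2) unfolding antichain_def by auto
        moreover have "le p q \<or> le q p" using f(2) h(3-5) by blast
        ultimately show False by blast
      qed
    qed
  qed
  have sub: "f ` B \<subseteq> {..<k'}" using B f by blast
  have "card (f ` B) = k'" using inj B by (simp add: card_image)
  thus ?thesis using sub by (simp add: card_subset_eq)
qed

lemma dilworth:
  assumes refl: "\<And>x. le x x" and trans: "\<And>x y z. le x y \<Longrightarrow> le y z \<Longrightarrow> le x z"
    and fin: "finite S"
  shows "\<forall>k. (\<forall>A\<subseteq>S. antichain le A \<longrightarrow> card A \<le> k) \<longrightarrow>
    (\<exists>c. (\<forall>x\<in>S. c x < k) \<and> (\<forall>x\<in>S. \<forall>y\<in>S. c x = c y \<longrightarrow> le x y \<or> le y x))"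
  using fin
proof (induction S rule: finite_psubset_induct)
  case (psubset S)
  show ?case
  proof (intro allI impI)
    fix k assume kS: "\<forall>A\<subseteq>S. antichain le A \<longrightarrow> card A \<le> k"
    show "\<exists>c. (\<forall>x\<in>S. c x < k) \<and> (\<forall>x\<in>S. \<forall>y\<in>S. c x = c y \<longrightarrow> le x y \<or> le y x)"
    proof (cases "S = {}")
      case True thus ?thesis by auto
    next
      case False
      obtain a where a: "a \<in> S" "\<forall>x\<in>S. le a x \<longrightarrow> le x a"
        using finite_max[OF psubset.hyps(1) False, of le] trans by blast
      define S' where "S' = S - {a}"
      have fS': "finite S'" using psubset.hyps(1) by (simp add: S'_def)
      have pS': "S' \<subset> S" using a(1) by (auto simp: S'_def)
      define W where "W = {card A | A. A \<subseteq> S' \<and> antichain le A}"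
      have finW: "finite W"
      proof (rule finite_subset)
        show "W \<subseteq> {..card S'}" unfolding W_def using fS' by (auto intro: card_mono)
      qed auto
      have "0 \<in> W" unfolding W_def by (rule CollectI, rule exI[of _ "{}"]) (auto simp: antichain_def)
      hence WnE: "W \<noteq> {}" by auto
      define k' where "k' = Max W"
      have k'ge: "\<forall>A\<subseteq>S'. antichain le A \<longrightarrow> card A \<le> k'"
        unfolding k'_def using finW W_def by (auto intro: Max_ge)
      have "k' \<in> W" unfolding k'_def using finW WnE by (rule Max_in)
      then obtain A0 where A0: "A0 \<subseteq> S'" "antichain le A0" "card A0 = k'" unfolding W_def by blast
      obtain f where f: "\<forall>x\<in>S'. f x < k'" "\<forall>x\<in>S'. \<forall>y\<in>S'. f x = f y \<longrightarrow> le x y \<or> le y x"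
        using psubset.IH[OF pS'] k'ge by blast
      define M where "M i = {y \<in> S'. f y = i \<and> (\<exists>B\<subseteq>S'. antichain le B \<and> card B = k' \<and> y \<in> B)}" for i
      have meets: "\<exists>y\<in>B. f y = i" if "B \<subseteq> S'" "antichain le B" "card B = k'" "i < k'" for B i
        using antichain_colours[OF that(1-3) fS' f refl] that(4) by (metis imageE lessThan_iff)
      define x where "x i = (SOME m. m \<in> M i \<and> (\<forall>y\<in>M i. le y m))" for i
      have xM: "x i \<in> M i \<and> (\<forall>y\<in>M i. le y (x i))" if "i < k'" for i
      proof -
        have "M i \<noteq> {}" using meets[OF A0 that] A0 unfolding M_def by blast
        moreover have "finite (M i)" using fS' unfolding M_def by auto
        ultimately obtain m where m: "m \<in> M i" "\<forall>y\<in>M i. le m y \<longrightarrow> le y m"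
          using finite_max[of "M i" le] trans by blast
        have "\<forall>y\<in>M i. le y m"
        proof
          fix y assume "y \<in> M i"
          hence "le y m \<or> le m y" using m(1) f(2) unfolding M_def by auto
          thus "le y m" using m(2) \<open>y \<in> M i\<close> by blast
        qed
        with m(1) have "\<exists>m. m \<in> M i \<and> (\<forall>y\<in>M i. le y m)" by blast
        thus ?thesis unfolding x_def by (rule someI_ex)
      qed
      have xS': "x i \<in> S'" and fx: "f (x i) = i" if "i < k'" for i
        using xM[OF that] unfolding M_def by auto
      define X where "X = x ` {..<k'}"
      have injx: "inj_on x {..<k'}" by (rule inj_onI) (metis fx lessThan_iff)
      have cX: "card X = k'" unfolding X_def using injx by (simp add: card_image)
      have XS': "X \<subseteq> S'" unfolding X_def using xS' by auto
      have aX: "antichain le X"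
        unfolding antichain_def
      proof (intro ballI impI)
        fix p q assume "p \<in> X" "q \<in> X" "p \<noteq> q"
        then obtain i j where ij: "i < k'" "j < k'" "p = x i" "q = x j" unfolding X_def by auto
        have "i \<noteq> j" using ij \<open>p \<noteq> q\<close> by auto
        show "\<not> le p q"
        proof
          assume lpq: "le p q"
          obtain Bj where Bj: "Bj \<subseteq> S'" "antichain le Bj" "card Bj = k'" "x j \<in> Bj"
            using xM[OF ij(2)] unfolding M_def by blast
          obtain y where y: "y \<in> Bj" "f y = i" using meets[OF Bj(1-3) ij(1)] by blast
          have "y \<in> M i" unfolding M_def using y Bj by blast
          hence "le y (x i)" using xM[OF ij(1)] by blast
          hence "le y (x j)" using lpq ij trans by blast
          moreover have "y \<noteq> x j" using y fx[OF ij(2)] \<open>i \<noteq> j\<close> by auto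
          ultimately show False using Bj(2,4) y(1) unfolding antichain_def by blast
        qed
      qed
      have k'k: "k' \<le> k" using kS aX XS' cX unfolding S'_def by auto
      show ?thesis
      proof (cases "\<exists>i<k'. le (x i) a")
        case False
        have aX': "a \<notin> X" using XS' by (auto simp: S'_def)
        have "antichain le (insert a X)"
          unfolding antichain_def
        proof (intro ballI impI)
          fix p q assume pq: "p \<in> insert a X" "q \<in> insert a X" "p \<noteq> q"
          have nxa: "\<not> le z a" if "z \<in> X" for z using False that unfolding X_def by auto
          have nax: "\<not> le a z" if "z \<in> X" for z using nxa[OF that] a(2) that XS' unfolding S'_def by auto
          show "\<not> le p q"
          proof (cases "p = a")
            case True thus ?thesis using pq nax by auto
          next
            case False
            hence "p \<in> X" using pq by auto
            thus ?thesis using pq nxa aX unfolding antichain_def by auto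
          qed
        qed
        moreover have "insert a X \<subseteq> S" using XS' a(1) by (auto simp: S'_def)
        ultimately have "card (insert a X) \<le> k" using kS by blast
        hence kk: "k' < k" using aX' cX XS' fS' by (simp add: finite_subset)
        define c where "c = f(a := k')"
        have "\<forall>z\<in>S. c z < k"
        proof
          fix z assume "z \<in> S"
          show "c z < k"
          proof (cases "z = a")
            case True thus ?thesis using kk by (simp add: c_def)
          next
            case False
            hence "f z < k'" using f(1) \<open>z \<in> S\<close> by (simp add: S'_def)
            thus ?thesis using kk False by (simp add: c_def)
          qed
        qed
        moreover have "\<forall>z\<in>S. \<forall>y\<in>S. c z = c y \<longrightarrow> le z y \<or> le y z"
          using f refl unfolding c_def S'_def by (metis Diff_iff fun_upd_apply less_irrefl singletonD)
        ultimately show ?thesis by blast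
      next
        case True
        then obtain i where i: "i < k'" "le (x i) a" by blast
        define K where "K = insert a {z \<in> S'. f z = i \<and> le z (x i)}"
        define S'' where "S'' = S - K"
        have pS'': "S'' \<subset> S" using a(1) unfolding S''_def K_def by auto
        have k''ge: "\<forall>A\<subseteq>S''. antichain le A \<longrightarrow> card A \<le> k' - 1"
        proof (intro allI impI)
          fix A assume A: "A \<subseteq> S''" "antichain le A"
          have AS': "A \<subseteq> S'" using A(1) unfolding S''_def S'_def K_def by auto
          have "card A \<le> k'" using k'ge AS' A(2) by blast
          moreover have "card A \<noteq> k'"
          proof
            assume "card A = k'"
            then obtain y where y: "y \<in> A" "f y = i" using meets[OF AS' A(2) _ i(1)] by blast
            have "y \<in> M i" unfolding M_def using y AS' A(2) \<open>card A = k'\<close> by blast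
            hence "le y (x i)" using xM[OF i(1)] by blast
            hence "y \<in> K" unfolding K_def using y AS' by auto
            thus False using y A(1) unfolding S''_def by auto
          qed
          ultimately show "card A \<le> k' - 1" by simp
        qed
        obtain g where g: "\<forall>z\<in>S''. g z < k' - 1" "\<forall>z\<in>S''. \<forall>y\<in>S''. g z = g y \<longrightarrow> le z y \<or> le y z"
          using psubset.IH[OF pS''] k''ge by blast
        have chainK: "le z y \<or> le y z" if "z \<in> K" "y \<in> K" for z y
        proof -
          have zl: "le z a" if "z \<in> K" for z
            using that i(2) trans refl unfolding K_def by blast
          show ?thesis
          proof (cases "z = a \<or> y = a")
            case True thus ?thesis using zl that by blast
          next
            case False
            hence "z \<in> S'" "y \<in> S'" "f z = i" "f y = i" using that unfolding K_def by auto
            thus ?thesis using f(2) by blast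
          qed
        qed
        define c where "c z = (if z \<in> K then k' - 1 else g z)" for z
        have "\<forall>z\<in>S. c z < k"
        proof
          fix z assume "z \<in> S"
          show "c z < k"
          proof (cases "z \<in> K")
            case True thus ?thesis using i(1) k'k by (simp add: c_def)
          next
            case False
            hence "g z < k' - 1" using g(1) \<open>z \<in> S\<close> by (simp add: S''_def)
            thus ?thesis using k'k False by (simp add: c_def)
          qed
        qed
        moreover have "\<forall>z\<in>S. \<forall>y\<in>S. c z = c y \<longrightarrow> le z y \<or> le y z"
        proof (intro ballI impI)
          fix z y assume zy: "z \<in> S" "y \<in> S" "c z = c y"
          show "le z y \<or> le y z"
          proof (cases "z \<in> K")
            case True
            show ?thesis
            proof (cases "y \<in> K")
              case True thus ?thesis using chainK \<open>z \<in> K\<close> by blast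
            next
              case False
              hence "y \<in> S''" using zy unfolding S''_def by auto
              thus ?thesis using zy True False g(1) unfolding c_def by fastforce
            qed
          next
            case False
            hence zS: "z \<in> S''" using zy unfolding S''_def by auto
            show ?thesis
            proof (cases "y \<in> K")
              case True thus ?thesis using zy zS False g(1) unfolding c_def by fastforce
            next
              case yK: False
              hence "y \<in> S''" using zy unfolding S''_def by auto
              thus ?thesis using zy zS False yK g(2) unfolding c_def by auto
            qed
          qed
        qed
        ultimately show ?thesis by blast
      qed
    qed
  qed
qed


lemma clique_le_chrom: "clique_number H E \<le> chromatic_number H E"
  unfolding clique_number_def chromatic_number_def
proof (rule Sup_least)
  fix x assume "x \<in> {enat (card S) | S. S \<subseteq> H \<and> finite S \<and> is_clique E S}"
  then obtain S where S: "x = enat (card S)" "S \<subseteq> H" "finite S" "is_clique E S" by blast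
  show "x \<le> Inf {enat k | k. \<exists>f. proper_colouring H E f k}"
  proof (rule Inf_greatest)
    fix y assume "y \<in> {enat k | k. \<exists>f. proper_colouring H E f k}"
    then obtain k f where y: "y = enat k" "proper_colouring H E f k" by blast
    have "inj_on f S"
    proof (rule inj_onI)
      fix p q assume "p \<in> S" "q \<in> S" "f p = f q"
      thus "p = q" using y(2) S unfolding proper_colouring_def is_clique_def by blast
    qed
    moreover have "f ` S \<subseteq> {..<k}" using y(2) S unfolding proper_colouring_def by auto
    ultimately have "card S \<le> card {..<k}" by (intro card_inj_on_le) auto
    thus "x \<le> y" using S y by simp
  qed
qed

lemma clique_mono: "H \<subseteq> V \<Longrightarrow> clique_number H E \<le> clique_number V E"
  unfolding clique_number_def by (rule Sup_subset_mono) blast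

lemma chrom_le: "proper_colouring H E f k \<Longrightarrow> chromatic_number H E \<le> enat k"
  unfolding chromatic_number_def by (rule Inf_lower) blast

lemma adj_dvd: "cozero_adj a b \<longleftrightarrow> a \<noteq> b \<and> \<not> b dvd a \<and> \<not> a dvd b"
  unfolding cozero_adj_def dvd_def by (auto simp: mult.commute)

lemma idem_not_unit:
  fixes s :: "'a::comm_ring_1"
  assumes "s*s = s" "s dvd 1" shows "s = 1"
proof -
  obtain u where u: "s*u = 1" using assms(2) by (metis dvd_def)
  have "s = s*(s*u)" by (simp add: u)
  also have "\<dots> = (s*s)*u" by (simp add: mult.assoc)
  also have "\<dots> = 1" using assms(1) u by simp
  finally show ?thesis .
qed

theorem theorem3p4:
  assumes "von_neumann_regular TYPE('a::comm_ring_1)"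
    and "clique_number (W_star :: 'a set) cozero_adj < \<infinity>"
  shows "perfect_graph (W_star :: 'a set) cozero_adj"
proof -
  let ?W = "W_star :: 'a set"
  from assms(2) obtain w where w: "clique_number ?W cozero_adj = enat w"
    by (cases "clique_number ?W cozero_adj") auto
  have finB: "finite (Bset (1::'a))"
  proof (rule ccontr)
    assume "infinite (Bset (1::'a))"
    from orth[OF this, of "w+2"] obtain S :: "'a set" where S: "finite S" "card S = w+2" "S \<subseteq> Bset 1" "0 \<notin> S"
      "\<forall>x\<in>S. \<forall>y\<in>S. x\<noteq>y \<longrightarrow> x*y = 0" by auto
    have idS: "s*s = s" if "s \<in> S" for s using S(3) that by (auto simp: Bset_def)
    have SW: "S \<subseteq> ?W"
    proof
      fix s assume sS: "s \<in> S"
      have "S - {s} \<noteq> {}"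
      proof
        assume "S - {s} = {}"
        hence "S \<subseteq> {s}" by auto
        hence "card S \<le> card {s}" by (intro card_mono) auto
        hence "card S \<le> 1" by simp
        thus False using S(2) by linarith
      qed
      then obtain t where t: "t \<in> S" "t \<noteq> s" by auto
      have "s \<noteq> 1"
      proof
        assume "s = 1"
        moreover have "s*t = 0" using bspec[OF bspec[OF S(5) sS] t(1)] t(2) by simp
        ultimately have "t = 0" by simp
        thus False using t S(4) by simp
      qed
      hence "\<not> s dvd 1" using idem_not_unit idS[OF sS] by blast
      moreover have "s \<noteq> 0" using sS S(4) by auto
      ultimately show "s \<in> ?W" by (simp add: W_star_def)
    qed
    have "is_clique cozero_adj S"
      unfolding is_clique_def adj_dvd
    proof (intro ballI impI conjI)
      fix x y assume xy: "x \<in> S" "y \<in> S" "x \<noteq> y"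
      show "x \<noteq> y" by fact
      show "\<not> y dvd x"
      proof
        assume "y dvd x"
        then obtain k where k: "x = y*k" by (auto simp: dvd_def)
        have "x*y = (y*y)*k" unfolding k by (simp add: ac_simps)
        also have "\<dots> = y*k" using idS[OF xy(2)] by simp
        finally have "x*y = x" using k by simp
        moreover have "x*y = 0" using bspec[OF bspec[OF S(5) xy(1)] xy(2)] xy(3) by simp
        ultimately have "x = 0" by simp
        thus False using S(4) xy by auto
      qed
      show "\<not> x dvd y"
      proof
        assume "x dvd y"
        then obtain k where k: "y = x*k" by (auto simp: dvd_def)
        have "y*x = (x*x)*k" unfolding k by (simp add: ac_simps)
        also have "\<dots> = x*k" using idS[OF xy(1)] by simp
        finally have "y*x = y" using k by simp
        moreover have "y*x = 0" using bspec[OF bspec[OF S(5) xy(2)] xy(1)] not_sym[OF xy(3)] by simp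
        ultimately have "y = 0" by simp
        thus False using S(4) xy by auto
      qed
    qed
    hence "enat (card S) \<le> clique_number ?W cozero_adj"
      unfolding clique_number_def using S(1) SW by (intro Sup_upper) blast
    thus False using w S(2) by simp
  qed
  have vnr: "\<forall>r::'a. \<exists>s. r = r^2 * s" using assms(1) by (simp add: von_neumann_regular_def)
  define id' where "id' a = a * (SOME s. a = a^2 * s)" for a :: 'a
  have idB: "id' a \<in> Bset 1" and d1: "a dvd id' a" and d2: "id' a dvd a" for a
  proof -
    obtain s where s: "a = a^2 * s" using vnr by blast
    define t where "t = (SOME s. a = a^2 * s)"
    have t: "a = a^2 * t" unfolding t_def using s by (rule someI)
    have ida: "id' a = a * t" by (simp add: id'_def t_def)
    have "(a*t)*(a*t) = (a^2*t)*t" by (simp add: power2_eq_square ac_simps)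
    also have "\<dots> = a*t" using t by simp
    finally show "id' a \<in> Bset 1" by (simp add: Bset_def ida)
    show "a dvd id' a" by (simp add: ida)
    have "a = (a*t)*a" using t by (simp add: power2_eq_square ac_simps)
    thus "id' a dvd a" by (metis ida dvd_triv_left)
  qed
  show ?thesis
    unfolding perfect_graph_def
  proof (intro allI impI)
    fix H assume HW: "H \<subseteq> ?W"
    have "clique_number H cozero_adj \<le> enat w" using clique_mono[OF HW, of cozero_adj] w by simp
    then obtain wH where wH: "clique_number H cozero_adj = enat wH" using enat_ile by blast
    let ?R = "id' ` H"
    have finR: "finite ?R" using finB idB by (meson finite_subset image_subsetI)
    have anti: "\<forall>A\<subseteq>?R. antichain (dvd) A \<longrightarrow> card A \<le> wH"
    proof (intro allI impI)
      fix A assume A: "A \<subseteq> ?R" "antichain (dvd) A"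
      define g where "g = inv_into H id'"
      have gH: "g t \<in> H" if "t \<in> A" for t
        unfolding g_def by (rule inv_into_into) (rule subsetD[OF A(1) that])
      have gid: "id' (g t) = t" if "t \<in> A" for t
        unfolding g_def by (rule f_inv_into_f) (rule subsetD[OF A(1) that])
      have nd: "\<not> u dvd v" if "u \<in> A" "v \<in> A" "u \<noteq> v" for u v
      proof -
        have ac: "\<forall>x\<in>A. \<forall>y\<in>A. x \<noteq> y \<longrightarrow> \<not> x dvd y" using A(2) by (simp add: antichain_def)
        show ?thesis using bspec[OF bspec[OF ac that(1)] that(2)] that(3) by simp
      qed
      have injg: "inj_on g A"
      proof (rule inj_onI)
        fix u v assume uv: "u \<in> A" "v \<in> A" "g u = g v"
        have "u = id' (g u)" using gid[OF uv(1)] by simp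
        also have "\<dots> = id' (g v)" using uv(3) by simp
        also have "\<dots> = v" using gid[OF uv(2)] by simp
        finally show "u = v" .
      qed
      have "is_clique cozero_adj (g ` A)"
        unfolding is_clique_def adj_dvd
      proof (intro ballI impI conjI)
        fix p q assume pq: "p \<in> g ` A" "q \<in> g ` A" "p \<noteq> q"
        then obtain t t' where tt: "t \<in> A" "t' \<in> A" "p = g t" "q = g t'" by auto
        have "t \<noteq> t'" using tt pq by auto
        have ip: "id' p = t" using gid[OF tt(1)] tt(3) by simp
        have iq: "id' q = t'" using gid[OF tt(2)] tt(4) by simp
        show "p \<noteq> q" by fact
        show "\<not> q dvd p"
        proof
          assume qp: "q dvd p"
          have "id' q dvd id' p" by (rule dvd_trans[OF dvd_trans[OF d2[of q] qp] d1[of p]])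
          hence "t' dvd t" by (simp only: ip iq)
          thus False using nd[OF tt(2) tt(1)] \<open>t \<noteq> t'\<close> by auto
        qed
        show "\<not> p dvd q"
        proof
          assume qp: "p dvd q"
          have "id' p dvd id' q" by (rule dvd_trans[OF dvd_trans[OF d2[of p] qp] d1[of q]])
          hence "t dvd t'" by (simp only: ip iq)
          thus False using nd[OF tt(1) tt(2)] \<open>t \<noteq> t'\<close> by auto
        qed
      qed
      moreover have "finite A" by (rule finite_subset[OF A(1) finR])
      moreover have "g ` A \<subseteq> H" using gH by auto
      ultimately have "enat (card (g ` A)) \<le> clique_number H cozero_adj"
        unfolding clique_number_def by (intro Sup_upper CollectI exI[of _ "g ` A"]) auto
      thus "card A \<le> wH" using wH injg by (simp add: card_image)
    qed
    have D: "(\<forall>A\<subseteq>?R. antichain (dvd) A \<longrightarrow> card A \<le> wH) \<longrightarrow> (\<exists>c. (\<forall>x\<in>?R. c x < wH) \<and> (\<forall>x\<in>?R. \<forall>y\<in>?R. c x = c y \<longrightarrow> x dvd y \<or> y dvd x))"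
    proof -
      have "\<forall>k. (\<forall>A\<subseteq>?R. antichain (dvd) A \<longrightarrow> card A \<le> k) \<longrightarrow> (\<exists>c. (\<forall>x\<in>?R. c x < k) \<and> (\<forall>x\<in>?R. \<forall>y\<in>?R. c x = c y \<longrightarrow> x dvd y \<or> y dvd x))"
        by (rule dilworth[OF dvd_refl _ finR]) (rule dvd_trans)
      thus ?thesis by (rule spec)
    qed
    have "\<exists>c. (\<forall>x\<in>?R. c x < wH) \<and> (\<forall>x\<in>?R. \<forall>y\<in>?R. c x = c y \<longrightarrow> x dvd y \<or> y dvd x)" by (rule mp[OF D anti])
    then obtain c where cc: "(\<forall>x\<in>?R. c x < wH) \<and> (\<forall>x\<in>?R. \<forall>y\<in>?R. c x = c y \<longrightarrow> x dvd y \<or> y dvd x)" ..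
    note c = conjunct1[OF cc] conjunct2[OF cc]
    have "proper_colouring H cozero_adj (\<lambda>a. c (id' a)) wH"
      unfolding proper_colouring_def
    proof (intro conjI ballI impI)
      fix x assume "x \<in> H" thus "c (id' x) < wH" using c(1) by blast
    next
      fix x y assume xy: "x \<in> H" "y \<in> H" "x \<noteq> y" "cozero_adj x y"
      show "c (id' x) \<noteq> c (id' y)"
      proof
        assume "c (id' x) = c (id' y)"
        hence "id' x dvd id' y \<or> id' y dvd id' x" using c(2) xy by blast
        hence "x dvd y \<or> y dvd x" using d1[of x] d2[of x] d1[of y] d2[of y] dvd_trans by blast
        thus False using xy(4) adj_dvd by blast
      qed
    qed
    hence "chromatic_number H cozero_adj \<le> enat wH" by (rule chrom_le)
    thus "clique_number H cozero_adj = chromatic_number H cozero_adj"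
      using clique_le_chrom[of H cozero_adj] wH by (simp add: antisym)
  qed
qed

end
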